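(* Let $q$ be a prime power and $n=q^4-1$. There is no symmetric cyclotomic coset of cardinality $2$; that is, there is no $x\in\{0,\ldots,n-1\}$ with $\#I_x=2$ and $I_{n-qx}=I_x$.
   Context: Identify $\mathbb{Z}_n$ with $\{0,\ldots,n-1\}$, all arithmetic modulo $n$. The cyclotomic coset of $x$ with respect to $q^2$ is $I_x=\{x,\,q^2x\bmod n\}$. The (Hermitian) reciprocal coset of $I_x$ is $I_{n-qx}$; $I_x$ is symmetric if $I_{n-qx}=I_x$. *)

theory Defs
  imports "HOL-Computational_Algebra.Primes"
begin

definition prime_power :: "nat \<Rightarrow> bool" where
  "prime_power q \<longleftrightarrow> (\<exists>p k. prime p \<and> k \<ge> 1 \<and> q = p ^ k)"

definition cyc_coset :: "nat \<Rightarrow> nat \<Rightarrow> nat \<Rightarrow> nat set" where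
  "cyc_coset n q x = {x mod n, (q^2 * x) mod n}"

definition recip_index :: "nat \<Rightarrow> nat \<Rightarrow> nat \<Rightarrow> nat" where
  "recip_index n q x = (n - (q * x) mod n) mod n"

end

theory Submission
  imports Defs "HOL-Number_Theory.Cong"
begin

lemma key:
  fixes q n x :: nat
  assumes cop: "coprime q n" and xn: "x < n"
    and c2: "card (cyc_coset n q x) = 2"
    and eq: "cyc_coset n q (recip_index n q x) = cyc_coset n q x"
  shows False
proof -
  define y where "y = recip_index n q x"
  have n0: "n > 0" using xn by simp
  have yn: "y < n" using n0 unfolding y_def recip_index_def by simp
  have ycong: "[y + q * x = 0] (mod n)"
  proof -
    have "(q*x) mod n \<le> n" using n0 by (meson less_imp_le mod_less_divisor)
    have "[y + (q*x) mod n = (n - (q * x) mod n) + (q*x) mod n] (mod n)"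
      unfolding y_def recip_index_def cong_def by (simp add: mod_add_left_eq)
    also have "(n - (q * x) mod n) + (q*x) mod n = n" using \<open>(q*x) mod n \<le> n\<close> by simp
    finally have "[y + (q*x) mod n = 0] (mod n)" by (simp add: cong_def)
    moreover have "[y + (q*x) mod n = y + q*x] (mod n)" by (simp add: cong_def mod_add_right_eq)
    ultimately show ?thesis by (meson cong_sym cong_trans)
  qed
  have "y \<in> cyc_coset n q y" using yn unfolding cyc_coset_def by simp
  hence "y \<in> cyc_coset n q x" using eq y_def by simp
  hence "y = x \<or> y = (q^2*x) mod n" using xn unfolding cyc_coset_def by auto
  hence A: "[x + q * x = 0] (mod n)"
  proof
    assume "y = x" thus ?thesis using ycong by simp
  next
    assume h: "y = (q^2*x) mod n"
    have "[q^2*x + q*x = 0] (mod n)" using ycong h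
      by (simp add: cong_def mod_add_left_eq)
    hence "[q * (q*x + x) = q * 0] (mod n)" by (simp add: power2_eq_square algebra_simps)
    hence "[q*x + x = 0] (mod n)" using cop cong_mult_lcancel_nat by blast
    thus ?thesis by (simp add: add.commute)
  qed
  have "[q * (x + q*x) = q * 0] (mod n)" using A cong_scalar_left by blast
  hence B: "[q^2*x + q*x = 0] (mod n)" by (simp add: power2_eq_square algebra_simps)
  have "[q^2*x + q*x = x + q*x] (mod n)" using A B by (meson cong_sym cong_trans)
  hence "[q^2*x = x] (mod n)" using cong_add_rcancel_nat by blast
  hence "(q^2*x) mod n = x" using xn by (simp add: cong_def)
  hence "cyc_coset n q x = {x}" using xn unfolding cyc_coset_def by simp
  thus False using c2 by simp
qed

theorem mainTheorem9:
  fixes q n :: nat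
  assumes "prime_power q"
    and "n = q ^ 4 - 1"
  shows "\<not> (\<exists>x < n. card (cyc_coset n q x) = 2 \<and>
                 cyc_coset n q (recip_index n q x) = cyc_coset n q x)"
proof
  assume "\<exists>x < n. card (cyc_coset n q x) = 2 \<and>
                 cyc_coset n q (recip_index n q x) = cyc_coset n q x"
  then obtain x where x: "x < n" "card (cyc_coset n q x) = 2"
    "cyc_coset n q (recip_index n q x) = cyc_coset n q x" by blast
  have q0: "q > 0" using assms(1) unfolding prime_power_def
    by (metis prime_gt_0_nat zero_less_power)
  hence "q^4 = n + 1" using assms(2) by simp
  have "coprime (n+1) n" by simp
  hence "coprime (q^4) n" using \<open>q^4 = n + 1\<close> by simp
  hence "coprime q n" by simp
  thus False using key x by blast
qed

end
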